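(* Let $D\colon\mathbf{I}\to\mathbf{CompOrd}$ be a codirected diagram, let $(f_i\colon X\to D(i))_{i\in\mathbf{I}}$ be a limit cone for $D$ in $\mathbf{CompOrd}$, and let $K,L$ be closed subsets of $X$. Then: (1) $\uparrow K\subseteq\uparrow L$ iff $\uparrow f_i[K]\subseteq\uparrow f_i[L]$ for all $i\in\mathbf{I}$; (2) $\downarrow K\subseteq\downarrow L$ iff $\downarrow f_i[K]\subseteq\downarrow f_i[L]$ for all $i\in\mathbf{I}$; (3) $\updownarrow K\le_{\mathrm{EM}}\updownarrow L$ iff $\updownarrow f_i[K]\le_{\mathrm{EM}}\updownarrow f_i[L]$ for all $i\in\mathbf{I}$.
   Context: $\mathbf{CompOrd}$ is the category of compact ordered spaces (compact Hausdorff spaces with a partial order closed in $X\times X$) and continuous order-preserving maps. For a subset $Y$ of a poset, $\uparrow Y$, $\downarrow Y$ denote up- and down-closure and $\updownarrow Y=\uparrow Y\cap\downarrow Y$. For subsets $K,L$ of a poset, the Egli–Milner order is $K\le_{\mathrm{EM}}L$ iff $\uparrow L\subseteq\uparrow K$ and $\downarrow K\subseteq\downarrow L$. A codirected diagram is a diagram indexed by a small cofiltered preorder. *)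

theory Defs
  imports "HOL-Analysis.Analysis"
begin

definition comp_ord :: "'a topology \<Rightarrow> ('a \<Rightarrow> 'a \<Rightarrow> bool) \<Rightarrow> bool" where
  "comp_ord T R \<longleftrightarrow>
     compact_space T \<and> Hausdorff_space T \<and>
     (\<forall>x\<in>topspace T. R x x) \<and>
     (\<forall>x\<in>topspace T. \<forall>y\<in>topspace T. R x y \<and> R y x \<longrightarrow> x = y) \<and>
     (\<forall>x\<in>topspace T. \<forall>y\<in>topspace T. \<forall>z\<in>topspace T. R x y \<and> R y z \<longrightarrow> R x z) \<and>
     closedin (prod_topology T T) {(x, y). x \<in> topspace T \<and> y \<in> topspace T \<and> R x y}"

definition comp_ord_map ::
  "'a topology \<Rightarrow> ('a \<Rightarrow> 'a \<Rightarrow> bool) \<Rightarrow> 'b topology \<Rightarrow> ('b \<Rightarrow> 'b \<Rightarrow> bool) \<Rightarrow> ('a \<Rightarrow> 'b) \<Rightarrow> bool" where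
  "comp_ord_map T R S Q f \<longleftrightarrow> continuous_map T S f \<and>
     (\<forall>x\<in>topspace T. \<forall>y\<in>topspace T. R x y \<longrightarrow> Q (f x) (f y))"

definition up_cl :: "'a set \<Rightarrow> ('a \<Rightarrow> 'a \<Rightarrow> bool) \<Rightarrow> 'a set \<Rightarrow> 'a set" where
  "up_cl C R Y = {z \<in> C. \<exists>y\<in>Y. R y z}"

definition down_cl :: "'a set \<Rightarrow> ('a \<Rightarrow> 'a \<Rightarrow> bool) \<Rightarrow> 'a set \<Rightarrow> 'a set" where
  "down_cl C R Y = {z \<in> C. \<exists>y\<in>Y. R z y}"

definition updown_cl :: "'a set \<Rightarrow> ('a \<Rightarrow> 'a \<Rightarrow> bool) \<Rightarrow> 'a set \<Rightarrow> 'a set" where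
  "updown_cl C R Y = up_cl C R Y \<inter> down_cl C R Y"

definition em_le :: "'a set \<Rightarrow> ('a \<Rightarrow> 'a \<Rightarrow> bool) \<Rightarrow> 'a set \<Rightarrow> 'a set \<Rightarrow> bool" where
  "em_le C R K L \<longleftrightarrow> up_cl C R L \<subseteq> up_cl C R K \<and> down_cl C R K \<subseteq> down_cl C R L"

definition cofiltered_preorder :: "'i set \<Rightarrow> ('i \<Rightarrow> 'i \<Rightarrow> bool) \<Rightarrow> bool" where
  "cofiltered_preorder I le \<longleftrightarrow>
     (\<forall>i\<in>I. le i i) \<and>
     (\<forall>i\<in>I. \<forall>j\<in>I. \<forall>k\<in>I. le i j \<and> le j k \<longrightarrow> le i k) \<and>
     I \<noteq> {} \<and> (\<forall>i\<in>I. \<forall>j\<in>I. \<exists>k\<in>I. le k i \<and> le k j)"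

definition comp_ord_diagram ::
  "'i set \<Rightarrow> ('i \<Rightarrow> 'i \<Rightarrow> bool) \<Rightarrow> ('i \<Rightarrow> 'b topology) \<Rightarrow> ('i \<Rightarrow> 'b \<Rightarrow> 'b \<Rightarrow> bool)
     \<Rightarrow> ('i \<Rightarrow> 'i \<Rightarrow> 'b \<Rightarrow> 'b) \<Rightarrow> bool" where
  "comp_ord_diagram I le T R d \<longleftrightarrow>
     (\<forall>i\<in>I. comp_ord (T i) (R i)) \<and>
     (\<forall>i\<in>I. \<forall>j\<in>I. le i j \<longrightarrow> comp_ord_map (T i) (R i) (T j) (R j) (d i j)) \<and>
     (\<forall>i\<in>I. \<forall>x\<in>topspace (T i). d i i x = x) \<and>
     (\<forall>i\<in>I. \<forall>j\<in>I. \<forall>k\<in>I. le i j \<and> le j k \<longrightarrow>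
        (\<forall>x\<in>topspace (T i). d j k (d i j x) = d i k x))"

definition comp_ord_cone ::
  "'i set \<Rightarrow> ('i \<Rightarrow> 'i \<Rightarrow> bool) \<Rightarrow> ('i \<Rightarrow> 'b topology) \<Rightarrow> ('i \<Rightarrow> 'b \<Rightarrow> 'b \<Rightarrow> bool)
     \<Rightarrow> ('i \<Rightarrow> 'i \<Rightarrow> 'b \<Rightarrow> 'b) \<Rightarrow> 'a topology \<Rightarrow> ('a \<Rightarrow> 'a \<Rightarrow> bool) \<Rightarrow> ('i \<Rightarrow> 'a \<Rightarrow> 'b) \<Rightarrow> bool" where
  "comp_ord_cone I le T R d TX RX f \<longleftrightarrow>
     comp_ord TX RX \<and>
     (\<forall>i\<in>I. comp_ord_map TX RX (T i) (R i) (f i)) \<and>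
     (\<forall>i\<in>I. \<forall>j\<in>I. le i j \<longrightarrow> (\<forall>x\<in>topspace TX. d i j (f i x) = f j x))"

definition comp_ord_limit_cone ::
  "'i set \<Rightarrow> ('i \<Rightarrow> 'i \<Rightarrow> bool) \<Rightarrow> ('i \<Rightarrow> 'b topology) \<Rightarrow> ('i \<Rightarrow> 'b \<Rightarrow> 'b \<Rightarrow> bool)
     \<Rightarrow> ('i \<Rightarrow> 'i \<Rightarrow> 'b \<Rightarrow> 'b) \<Rightarrow> 'a topology \<Rightarrow> ('a \<Rightarrow> 'a \<Rightarrow> bool) \<Rightarrow> ('i \<Rightarrow> 'a \<Rightarrow> 'b) \<Rightarrow> bool" where
  "comp_ord_limit_cone I le T R d TX RX f \<longleftrightarrow>
     comp_ord_cone I le T R d TX RX f \<and>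
     (\<forall>(TY::'a topology) RY g. comp_ord_cone I le T R d TY RY g \<longrightarrow>
        (\<exists>h. comp_ord_map TY RY TX RX h \<and> (\<forall>i\<in>I. \<forall>y\<in>topspace TY. f i (h y) = g i y) \<and>
           (\<forall>h'. comp_ord_map TY RY TX RX h' \<and> (\<forall>i\<in>I. \<forall>y\<in>topspace TY. f i (h' y) = g i y)
                 \<longrightarrow> (\<forall>y\<in>topspace TY. h' y = h y))))"

end

theory Submission
  imports Defs
begin

lemma lower_bound:
  assumes "cofiltered_preorder I le" "finite J" "J \<subseteq> I"
  shows "\<exists>k\<in>I. \<forall>j\<in>J. le k j"
  using assms(2,3)
proof (induction J rule: finite_induct)
  case empty
  have "I \<noteq> {}" using assms(1) unfolding cofiltered_preorder_def by blast
  then show ?case by blast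
next
  case (insert j J)
  have jI: "j \<in> I" and JI: "J \<subseteq> I" using insert.prems by auto
  obtain k where k: "k \<in> I" "\<forall>j\<in>J. le k j" using insert.IH[OF JI] by blast
  have c: "\<forall>i\<in>I. \<forall>j\<in>I. \<exists>k\<in>I. le k i \<and> le k j"
    and t: "\<forall>i\<in>I. \<forall>j\<in>I. \<forall>k\<in>I. le i j \<and> le j k \<longrightarrow> le i k"
    using assms(1) unfolding cofiltered_preorder_def by blast+
  obtain k' where k': "k' \<in> I" "le k' k" "le k' j" using c k(1) jI by blast
  have "\<forall>i\<in>insert j J. le k' i"
  proof
    fix i assume "i \<in> insert j J"
    then show "le k' i"
    proof
      assume "i = j" then show ?thesis using k' by simp
    next
      assume i: "i \<in> J"
      then have "i \<in> I" "le k i" using JI k by auto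
      then show ?thesis using t k' k(1) by blast
    qed
  qed
  then show ?case using k'(1) by blast
qed

lemma fmap: "\<forall>i\<in>I. continuous_map TX (T i) (f i) \<Longrightarrow> i \<in> I \<Longrightarrow> x \<in> topspace TX \<Longrightarrow> f i x \<in> topspace (T i)"
proof -
  assume cont: "\<forall>i\<in>I. continuous_map TX (T i) (f i)" and "i \<in> I" "x \<in> topspace TX"
  have "continuous_map TX (T i) (f i)" using cont \<open>i \<in> I\<close> by blast
  then show ?thesis using \<open>x \<in> topspace TX\<close> by (simp add: continuous_map_def Pi_iff)
qed

lemma up_core:
  assumes cof: "cofiltered_preorder I le"
    and Xc: "compact_space TX"
    and KX: "K \<subseteq> topspace TX" and Lc: "closedin TX L"
    and cont: "\<forall>i\<in>I. continuous_map TX (T i) (f i)"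
    and mono: "\<forall>i\<in>I. \<forall>x\<in>topspace TX. \<forall>y\<in>topspace TX. RX x y \<longrightarrow> R i (f i x) (f i y)"
    and trans: "\<forall>i\<in>I. \<forall>x\<in>topspace (T i). \<forall>y\<in>topspace (T i). \<forall>z\<in>topspace (T i). R i x y \<and> R i y z \<longrightarrow> R i x z"
    and gr: "\<forall>i\<in>I. closedin (prod_topology (T i) (T i)) {(x, y). x \<in> topspace (T i) \<and> y \<in> topspace (T i) \<and> R i x y}"
    and compat: "\<forall>i\<in>I. \<forall>j\<in>I. le i j \<longrightarrow> (\<forall>x\<in>topspace TX. d i j (f i x) = f j x)"
    and dmono: "\<forall>i\<in>I. \<forall>j\<in>I. le i j \<longrightarrow> (\<forall>x\<in>topspace (T i). \<forall>y\<in>topspace (T i). R i x y \<longrightarrow> R j (d i j x) (d i j y))"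
    and reflect: "\<forall>x\<in>topspace TX. \<forall>y\<in>topspace TX. (\<forall>i\<in>I. R i (f i x) (f i y)) \<longrightarrow> RX x y"
    and reflX: "\<forall>x\<in>topspace TX. RX x x"
    and transX: "\<forall>x\<in>topspace TX. \<forall>y\<in>topspace TX. \<forall>z\<in>topspace TX. RX x y \<and> RX y z \<longrightarrow> RX x z"
  shows "up_cl (topspace TX) RX K \<subseteq> up_cl (topspace TX) RX L \<longleftrightarrow>
            (\<forall>i\<in>I. up_cl (topspace (T i)) (R i) (f i ` K)
                    \<subseteq> up_cl (topspace (T i)) (R i) (f i ` L))"
proof
  have LX: "L \<subseteq> topspace TX" using Lc closedin_subset by blast
  have fX: "f i x \<in> topspace (T i)" if "i \<in> I" "x \<in> topspace TX" for i x
    by (rule fmap[OF cont that])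
  assume H: "up_cl (topspace TX) RX K \<subseteq> up_cl (topspace TX) RX L"
  show "\<forall>i\<in>I. up_cl (topspace (T i)) (R i) (f i ` K) \<subseteq> up_cl (topspace (T i)) (R i) (f i ` L)"
  proof (intro ballI subsetI)
    fix i z assume i: "i \<in> I" and z: "z \<in> up_cl (topspace (T i)) (R i) (f i ` K)"
    then obtain k where k: "k \<in> K" "R i (f i k) z" "z \<in> topspace (T i)" unfolding up_cl_def by auto
    have "k \<in> up_cl (topspace TX) RX K" using k KX reflX unfolding up_cl_def by auto
    then obtain l where l: "l \<in> L" "RX l k" using H unfolding up_cl_def by auto
    have lX: "l \<in> topspace TX" and kX: "k \<in> topspace TX" using l(1) LX k(1) KX by auto
    have "R i (f i l) (f i k)" using mono i lX kX l(2) by blast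
    then have "R i (f i l) z" using trans i fX[OF i lX] fX[OF i kX] k(2,3) by blast
    then show "z \<in> up_cl (topspace (T i)) (R i) (f i ` L)" using l k unfolding up_cl_def by auto
  qed
next
  show "\<forall>i\<in>I. up_cl (topspace (T i)) (R i) (f i ` K) \<subseteq> up_cl (topspace (T i)) (R i) (f i ` L) \<Longrightarrow>
    up_cl (topspace TX) RX K \<subseteq> up_cl (topspace TX) RX L"
  proof (intro subsetI)
    assume H: "\<forall>i\<in>I. up_cl (topspace (T i)) (R i) (f i ` K) \<subseteq> up_cl (topspace (T i)) (R i) (f i ` L)"
    have LX: "L \<subseteq> topspace TX" using Lc closedin_subset by blast
    have fX: "f i x \<in> topspace (T i)" if "i \<in> I" "x \<in> topspace TX" for i x
      by (rule fmap[OF cont that])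
    fix z assume z: "z \<in> up_cl (topspace TX) RX K"
    then obtain k where k: "k \<in> K" "RX k z" "z \<in> topspace TX" unfolding up_cl_def by auto
    define C where "C i = {l \<in> L. R i (f i l) (f i z)}" for i
    have Cne: "C i \<noteq> {}" if i: "i \<in> I" for i
    proof -
      have "f i z \<in> up_cl (topspace (T i)) (R i) (f i ` K)"
        using k i mono KX fX unfolding up_cl_def by blast
      then show ?thesis using H i unfolding up_cl_def C_def by blast
    qed
    have Ccl: "closedin TX (C i)" if i: "i \<in> I" for i
    proof -
      have cm: "continuous_map TX (prod_topology (T i) (T i)) (\<lambda>l. (f i l, f i z))"
      proof (intro continuous_map_pairedI)
        show "continuous_map TX (T i) (f i)" using cont i by blast
        show "continuous_map TX (T i) (\<lambda>l. f i z)" using fX[OF i k(3)] by simp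
      qed
      have "closedin TX {l \<in> topspace TX. (\<lambda>l. (f i l, f i z)) l \<in> {(x, y). x \<in> topspace (T i) \<and> y \<in> topspace (T i) \<and> R i x y}}"
        using closedin_continuous_map_preimage[OF cm] gr i by blast
      moreover have "C i = L \<inter> {l \<in> topspace TX. (\<lambda>l. (f i l, f i z)) l \<in> {(x, y). x \<in> topspace (T i) \<and> y \<in> topspace (T i) \<and> R i x y}}"
        using LX fX i k unfolding C_def by auto
      ultimately show ?thesis using Lc by auto
    qed
    have Cmono: "C k \<subseteq> C i" if "k \<in> I" "i \<in> I" "le k i" for k i
    proof
      fix l assume "l \<in> C k"
      then have l: "l \<in> L" "R k (f k l) (f k z)" unfolding C_def by auto
      then have "R i (d k i (f k l)) (d k i (f k z))" using dmono that fX LX k by blast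
      then show "l \<in> C i" using compat that LX l k unfolding C_def by auto
    qed
    have A: "\<forall>c\<in>C ` I. closedin TX c" using Ccl by auto
    have B: "\<forall>F. finite F \<and> F \<subseteq> C ` I \<longrightarrow> \<Inter> F \<noteq> {}"
      proof (intro allI impI)
        fix F assume F: "finite F \<and> F \<subseteq> C ` I"
        then obtain J where J: "J \<subseteq> I" "finite J" "F = C ` J" by (meson finite_subset_image)
        obtain m where m: "m \<in> I" "\<forall>j\<in>J. le m j" using lower_bound[OF cof J(2,1)] by auto
        have "C m \<subseteq> \<Inter> F" using Cmono m J by auto
        then show "\<Inter> F \<noteq> {}" using Cne m by auto
      qed
    have "\<Inter>(C ` I) \<noteq> {}"
      using spec[OF compact_space_fip[THEN iffD1, OF Xc], of "C ` I"] A B by blast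
    moreover have "I \<noteq> {}" using cof unfolding cofiltered_preorder_def by auto
    ultimately obtain l where l: "\<forall>i\<in>I. l \<in> C i" by auto
    then obtain i0 where "i0 \<in> I" using \<open>I \<noteq> {}\<close> by auto
    then have lL: "l \<in> L" using l unfolding C_def by auto
    have "RX l z" using reflect l lL LX k unfolding C_def by auto
    then show "z \<in> up_cl (topspace TX) RX L" using lL k unfolding up_cl_def by auto
  qed
qed

lemma dual_graph:
  assumes "closedin (prod_topology X X) {(x, y). x \<in> topspace X \<and> y \<in> topspace X \<and> R x y}"
  shows "closedin (prod_topology X X) {(x, y). x \<in> topspace X \<and> y \<in> topspace X \<and> R y x}"
proof -
  have cm: "continuous_map (prod_topology X X) (prod_topology X X) (\<lambda>p. (snd p, fst p))"
    by (simp add: continuous_map_pairedI continuous_map_fst continuous_map_snd)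
  have "closedin (prod_topology X X) {p \<in> topspace (prod_topology X X). (snd p, fst p) \<in> {(x, y). x \<in> topspace X \<and> y \<in> topspace X \<and> R x y}}"
    using closedin_continuous_map_preimage[OF cm assms] .
  moreover have "{p \<in> topspace (prod_topology X X). (snd p, fst p) \<in> {(x, y). x \<in> topspace X \<and> y \<in> topspace X \<and> R x y}}
     = {(x, y). x \<in> topspace X \<and> y \<in> topspace X \<and> R y x}" by auto
  ultimately show ?thesis by simp
qed

lemma down_up: "down_cl C R Y = up_cl C (\<lambda>a b. R b a) Y"
  unfolding down_cl_def up_cl_def by simp

lemma up_updown: "Y \<subseteq> C \<Longrightarrow> \<forall>x\<in>C. R x x \<Longrightarrow> \<forall>x\<in>C. \<forall>y\<in>C. \<forall>z\<in>C. R x y \<and> R y z \<longrightarrow> R x z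
  \<Longrightarrow> up_cl C R (updown_cl C R Y) = up_cl C R Y"
proof (intro equalityI subsetI)
  fix z assume Y: "Y \<subseteq> C" and r: "\<forall>x\<in>C. R x x" and t: "\<forall>x\<in>C. \<forall>y\<in>C. \<forall>z\<in>C. R x y \<and> R y z \<longrightarrow> R x z"
  { assume "z \<in> up_cl C R (updown_cl C R Y)"
    then obtain w where w: "z \<in> C" "w \<in> updown_cl C R Y" "R w z" unfolding up_cl_def by blast
    then obtain y where y: "y \<in> Y" "R y w" "w \<in> C" unfolding updown_cl_def up_cl_def by blast
    have "R y z" using t y w Y by blast
    then show "z \<in> up_cl C R Y" using y w unfolding up_cl_def by blast }
  { assume "z \<in> up_cl C R Y"
    then obtain y where y: "z \<in> C" "y \<in> Y" "R y z" unfolding up_cl_def by blast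
    have "y \<in> updown_cl C R Y" using y Y r unfolding updown_cl_def up_cl_def down_cl_def by blast
    then show "z \<in> up_cl C R (updown_cl C R Y)" using y unfolding up_cl_def by blast }
qed

lemma down_updown: "Y \<subseteq> C \<Longrightarrow> \<forall>x\<in>C. R x x \<Longrightarrow> \<forall>x\<in>C. \<forall>y\<in>C. \<forall>z\<in>C. R x y \<and> R y z \<longrightarrow> R x z
  \<Longrightarrow> down_cl C R (updown_cl C R Y) = down_cl C R Y"
proof (intro equalityI subsetI)
  fix z assume Y: "Y \<subseteq> C" and r: "\<forall>x\<in>C. R x x" and t: "\<forall>x\<in>C. \<forall>y\<in>C. \<forall>z\<in>C. R x y \<and> R y z \<longrightarrow> R x z"
  { assume "z \<in> down_cl C R (updown_cl C R Y)"
    then obtain w where w: "z \<in> C" "w \<in> updown_cl C R Y" "R z w" unfolding down_cl_def by blast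
    then obtain y where y: "y \<in> Y" "R w y" "w \<in> C" unfolding updown_cl_def down_cl_def by blast
    have "R z y" using t y w Y by blast
    then show "z \<in> down_cl C R Y" using y w unfolding down_cl_def by blast }
  { assume "z \<in> down_cl C R Y"
    then obtain y where y: "z \<in> C" "y \<in> Y" "R z y" unfolding down_cl_def by blast
    have "y \<in> updown_cl C R Y" using y Y r unfolding updown_cl_def up_cl_def down_cl_def by blast
    then show "z \<in> down_cl C R (updown_cl C R Y)" using y unfolding down_cl_def by blast }
qed


lemma discrete_comp_ord:
  assumes "finite S" "\<forall>x\<in>S. RY x x" "\<forall>x\<in>S. \<forall>y\<in>S. RY x y \<and> RY y x \<longrightarrow> x = y"
    "\<forall>x\<in>S. \<forall>y\<in>S. \<forall>z\<in>S. RY x y \<and> RY y z \<longrightarrow> RY x z"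
  shows "comp_ord (discrete_topology S) RY"
  unfolding comp_ord_def
proof (intro conjI)
  show "closedin (prod_topology (discrete_topology S) (discrete_topology S))
     {(x, y). x \<in> topspace (discrete_topology S) \<and> y \<in> topspace (discrete_topology S) \<and> RY x y}"
    by (rule closedin_Hausdorff_finite) (auto simp: Hausdorff_space_prod_topology assms(1) intro: finite_subset[of _ "S \<times> S"])
next
  show "compact_space (discrete_topology S)" using assms(1) by (simp add: compact_space_discrete_topology)
  show "Hausdorff_space (discrete_topology S)" by simp
  show "\<forall>x\<in>topspace (discrete_topology S). RY x x" unfolding topspace_discrete_topology by (rule assms(2))
  show "\<forall>x\<in>topspace (discrete_topology S). \<forall>y\<in>topspace (discrete_topology S). RY x y \<and> RY y x \<longrightarrow> x = y"
    unfolding topspace_discrete_topology by (rule assms(3))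
  show "\<forall>x\<in>topspace (discrete_topology S). \<forall>y\<in>topspace (discrete_topology S). \<forall>z\<in>topspace (discrete_topology S). RY x y \<and> RY y z \<longrightarrow> RY x z"
    unfolding topspace_discrete_topology by (rule assms(4))
qed

lemma discrete_cone:
  assumes cone: "comp_ord_cone I le T R d TX RX f" and S: "S \<subseteq> topspace TX" "finite S"
    and "\<forall>x\<in>S. RY x x" "\<forall>x\<in>S. \<forall>y\<in>S. RY x y \<and> RY y x \<longrightarrow> x = y"
    "\<forall>x\<in>S. \<forall>y\<in>S. \<forall>z\<in>S. RY x y \<and> RY y z \<longrightarrow> RY x z"
    and m: "\<forall>u\<in>S. \<forall>v\<in>S. RY u v \<longrightarrow> (\<forall>i\<in>I. R i (f i u) (f i v))"
  shows "comp_ord_cone I le T R d (discrete_topology S) RY f"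
  unfolding comp_ord_cone_def
proof (intro conjI ballI)
  show "comp_ord (discrete_topology S) RY" using discrete_comp_ord assms by blast
  fix i assume i: "i \<in> I"
  then have "continuous_map TX (T i) (f i)" using cone unfolding comp_ord_cone_def comp_ord_map_def by blast
  then show "comp_ord_map (discrete_topology S) RY (T i) (R i) (f i)"
    unfolding comp_ord_map_def using S m i by (auto simp: continuous_map_def)
  fix j assume j: "j \<in> I"
  show "le i j \<longrightarrow> (\<forall>x\<in>topspace (discrete_topology S). d i j (f i x) = f j x)"
    using cone i j S unfolding comp_ord_cone_def topspace_discrete_topology by blast
qed

lemma Ri_refl:
  assumes diag: "comp_ord_diagram I le T R d" and cone: "comp_ord_cone I le T R d TX RX f"
    and i: "i \<in> I" and u: "u \<in> topspace TX"
  shows "R i (f i u) (f i u)"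
proof -
  have "comp_ord (T i) (R i)" using diag i by (simp add: comp_ord_diagram_def)
  then have r: "\<forall>x\<in>topspace (T i). R i x x" by (simp add: comp_ord_def)
  have "continuous_map TX (T i) (f i)" using cone i by (simp add: comp_ord_cone_def comp_ord_map_def)
  then have "f i u \<in> topspace (T i)" using u by (simp add: continuous_map_def Pi_iff)
  then show ?thesis using r by blast
qed

lemma limit_inj:
  assumes diag: "comp_ord_diagram I le T R d" and lim: "comp_ord_limit_cone I le T R d TX RX f"
    and a: "a \<in> topspace TX" and b: "b \<in> topspace TX" and eq: "\<forall>i\<in>I. f i a = f i b"
  shows "a = b"
proof -
  have cone: "comp_ord_cone I le T R d TX RX f" using lim unfolding comp_ord_limit_cone_def by blast
  have co: "comp_ord TX RX" using cone unfolding comp_ord_cone_def by blast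
  have Ri: "\<forall>i\<in>I. R i (f i a) (f i a)"
    using Ri_refl[OF diag cone _ a] by blast
  have c1: "comp_ord_cone I le T R d (discrete_topology {a}) (=) f"
    by (rule discrete_cone[OF cone]) (use a Ri in auto)
  then obtain h where h: "\<forall>h'. comp_ord_map (discrete_topology {a}) (=) TX RX h' \<and> (\<forall>i\<in>I. \<forall>y\<in>topspace (discrete_topology {a}). f i (h' y) = f i y)
                 \<longrightarrow> (\<forall>y\<in>topspace (discrete_topology {a}). h' y = h y)"
    using lim unfolding comp_ord_limit_cone_def by blast
  have ma: "comp_ord_map (discrete_topology {a}) (=) TX RX (\<lambda>_. a)"
    using a co unfolding comp_ord_map_def comp_ord_def by auto
  have mb: "comp_ord_map (discrete_topology {a}) (=) TX RX (\<lambda>_. b)"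
    using b co unfolding comp_ord_map_def comp_ord_def by auto
  have "a = h a" using h ma by auto
  moreover have "b = h a" using h mb eq by auto
  ultimately show ?thesis by simp
qed

lemma limit_reflect:
  assumes diag: "comp_ord_diagram I le T R d" and lim: "comp_ord_limit_cone I le T R d TX RX f"
    and x: "x \<in> topspace TX" and y: "y \<in> topspace TX" and r: "\<forall>i\<in>I. R i (f i x) (f i y)"
  shows "RX x y"
proof (cases "x = y")
  case True
  have "comp_ord TX RX" using lim unfolding comp_ord_limit_cone_def comp_ord_cone_def by blast
  then show ?thesis using True x unfolding comp_ord_def by blast
next
  case False
  have cone: "comp_ord_cone I le T R d TX RX f" using lim unfolding comp_ord_limit_cone_def by blast
  have Ri: "\<forall>i\<in>I. \<forall>u\<in>topspace TX. R i (f i u) (f i u)"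
    using Ri_refl[OF diag cone] by blast
  define RY where "RY u v = (u = v \<or> (u = x \<and> v = y))" for u v
  have c1: "comp_ord_cone I le T R d (discrete_topology {x, y}) RY f"
    by (rule discrete_cone[OF cone]) (use x y Ri r False in \<open>auto simp: RY_def\<close>)
  then obtain h where h: "comp_ord_map (discrete_topology {x,y}) RY TX RX h"
     "\<forall>i\<in>I. \<forall>u\<in>topspace (discrete_topology {x,y}). f i (h u) = f i u"
    using lim unfolding comp_ord_limit_cone_def by blast
  have hX: "h u \<in> topspace TX" if "u \<in> {x,y}" for u
    using h(1) that unfolding comp_ord_map_def continuous_map_def by auto
  have "h x = x" using limit_inj[OF diag lim hX x] h(2) by auto
  moreover have "h y = y" using limit_inj[OF diag lim hX y] h(2) by auto
  moreover have "RX (h x) (h y)"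
  proof -
    have m: "\<forall>u\<in>topspace (discrete_topology {x,y}). \<forall>v\<in>topspace (discrete_topology {x,y}). RY u v \<longrightarrow> RX (h u) (h v)"
      using h(1) unfolding comp_ord_map_def by (rule conjunct2)
    have "RY x y" by (simp add: RY_def)
    then show ?thesis using m by simp
  qed
  ultimately show ?thesis by simp
qed


theorem lemma3p11:
  fixes I :: "'i set" and le :: "'i \<Rightarrow> 'i \<Rightarrow> bool"
    and T :: "'i \<Rightarrow> 'b topology" and R :: "'i \<Rightarrow> 'b \<Rightarrow> 'b \<Rightarrow> bool"
    and d :: "'i \<Rightarrow> 'i \<Rightarrow> 'b \<Rightarrow> 'b"
    and TX :: "'a topology" and RX :: "'a \<Rightarrow> 'a \<Rightarrow> bool" and f :: "'i \<Rightarrow> 'a \<Rightarrow> 'b"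
    and K L :: "'a set"
  assumes "cofiltered_preorder I le"
    and "comp_ord_diagram I le T R d"
    and "comp_ord_limit_cone I le T R d TX RX f"
    and "closedin TX K" and "closedin TX L"
  shows "(up_cl (topspace TX) RX K \<subseteq> up_cl (topspace TX) RX L \<longleftrightarrow>
            (\<forall>i\<in>I. up_cl (topspace (T i)) (R i) (f i ` K)
                    \<subseteq> up_cl (topspace (T i)) (R i) (f i ` L)))
       \<and> (down_cl (topspace TX) RX K \<subseteq> down_cl (topspace TX) RX L \<longleftrightarrow>
            (\<forall>i\<in>I. down_cl (topspace (T i)) (R i) (f i ` K)
                    \<subseteq> down_cl (topspace (T i)) (R i) (f i ` L)))
       \<and> (em_le (topspace TX) RX (updown_cl (topspace TX) RX K) (updown_cl (topspace TX) RX L) \<longleftrightarrow>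
            (\<forall>i\<in>I. em_le (topspace (T i)) (R i)
                      (updown_cl (topspace (T i)) (R i) (f i ` K))
                      (updown_cl (topspace (T i)) (R i) (f i ` L))))"
proof -
  note cof = assms(1)
  have cone: "comp_ord_cone I le T R d TX RX f" using assms(3) unfolding comp_ord_limit_cone_def by blast
  have coX: "comp_ord TX RX" using cone unfolding comp_ord_cone_def by blast
  have Xc: "compact_space TX" using coX unfolding comp_ord_def by blast
  have KX: "K \<subseteq> topspace TX" and LX: "L \<subseteq> topspace TX" using assms(4,5) closedin_subset by auto
  have cont: "\<forall>i\<in>I. continuous_map TX (T i) (f i)" and
    mono: "\<forall>i\<in>I. \<forall>x\<in>topspace TX. \<forall>y\<in>topspace TX. RX x y \<longrightarrow> R i (f i x) (f i y)"
    using cone unfolding comp_ord_cone_def comp_ord_map_def by auto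
  have coi: "\<forall>i\<in>I. comp_ord (T i) (R i)" using assms(2) unfolding comp_ord_diagram_def by blast
  have reflI: "\<forall>i\<in>I. \<forall>x\<in>topspace (T i). R i x x"
    using coi unfolding comp_ord_def by blast
  have transI: "\<forall>i\<in>I. \<forall>x\<in>topspace (T i). \<forall>y\<in>topspace (T i). \<forall>z\<in>topspace (T i). R i x y \<and> R i y z \<longrightarrow> R i x z"
    using coi unfolding comp_ord_def by blast
  have gr: "\<forall>i\<in>I. closedin (prod_topology (T i) (T i)) {(x, y). x \<in> topspace (T i) \<and> y \<in> topspace (T i) \<and> R i x y}"
    using coi unfolding comp_ord_def by blast
  have grd: "\<forall>i\<in>I. closedin (prod_topology (T i) (T i)) {(x, y). x \<in> topspace (T i) \<and> y \<in> topspace (T i) \<and> R i y x}"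
    using gr dual_graph by blast
  have compat: "\<forall>i\<in>I. \<forall>j\<in>I. le i j \<longrightarrow> (\<forall>x\<in>topspace TX. d i j (f i x) = f j x)"
    using cone unfolding comp_ord_cone_def by blast
  have dmono: "\<forall>i\<in>I. \<forall>j\<in>I. le i j \<longrightarrow> (\<forall>x\<in>topspace (T i). \<forall>y\<in>topspace (T i). R i x y \<longrightarrow> R j (d i j x) (d i j y))"
    using assms(2) unfolding comp_ord_diagram_def comp_ord_map_def by blast
  have reflect: "\<forall>x\<in>topspace TX. \<forall>y\<in>topspace TX. (\<forall>i\<in>I. R i (f i x) (f i y)) \<longrightarrow> RX x y"
    using limit_reflect[OF assms(2) assms(3)] by blast
  have reflX: "\<forall>x\<in>topspace TX. RX x x"
    using coX unfolding comp_ord_def by blast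
  have transX: "\<forall>x\<in>topspace TX. \<forall>y\<in>topspace TX. \<forall>z\<in>topspace TX. RX x y \<and> RX y z \<longrightarrow> RX x z"
    using coX unfolding comp_ord_def by blast
  have U1: "up_cl (topspace TX) RX K \<subseteq> up_cl (topspace TX) RX L \<longleftrightarrow>
            (\<forall>i\<in>I. up_cl (topspace (T i)) (R i) (f i ` K) \<subseteq> up_cl (topspace (T i)) (R i) (f i ` L))"
    by (rule up_core[OF cof Xc KX assms(5) cont mono transI gr compat dmono reflect reflX transX])
  have U2: "up_cl (topspace TX) RX L \<subseteq> up_cl (topspace TX) RX K \<longleftrightarrow>
            (\<forall>i\<in>I. up_cl (topspace (T i)) (R i) (f i ` L) \<subseteq> up_cl (topspace (T i)) (R i) (f i ` K))"
    by (rule up_core[OF cof Xc LX assms(4) cont mono transI gr compat dmono reflect reflX transX])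
  have monoD: "\<forall>i\<in>I. \<forall>x\<in>topspace TX. \<forall>y\<in>topspace TX. RX y x \<longrightarrow> R i (f i y) (f i x)"
    using mono by blast
  have transD: "\<forall>i\<in>I. \<forall>x\<in>topspace (T i). \<forall>y\<in>topspace (T i). \<forall>z\<in>topspace (T i). R i y x \<and> R i z y \<longrightarrow> R i z x"
    using transI by blast
  have dmonoD: "\<forall>i\<in>I. \<forall>j\<in>I. le i j \<longrightarrow> (\<forall>x\<in>topspace (T i). \<forall>y\<in>topspace (T i). R i y x \<longrightarrow> R j (d i j y) (d i j x))"
    using dmono by blast
  have reflectD: "\<forall>x\<in>topspace TX. \<forall>y\<in>topspace TX. (\<forall>i\<in>I. R i (f i y) (f i x)) \<longrightarrow> RX y x"
    using reflect by blast
  have transXD: "\<forall>x\<in>topspace TX. \<forall>y\<in>topspace TX. \<forall>z\<in>topspace TX. RX y x \<and> RX z y \<longrightarrow> RX z x"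
    using transX by blast
  have D1: "down_cl (topspace TX) RX K \<subseteq> down_cl (topspace TX) RX L \<longleftrightarrow>
            (\<forall>i\<in>I. down_cl (topspace (T i)) (R i) (f i ` K) \<subseteq> down_cl (topspace (T i)) (R i) (f i ` L))"
    unfolding down_up
    by (rule up_core[OF cof Xc KX assms(5) cont monoD transD grd compat dmonoD reflectD reflX transXD])
  have fK: "f i ` K \<subseteq> topspace (T i)" "f i ` L \<subseteq> topspace (T i)" if "i \<in> I" for i
    using fmap[OF cont that] KX LX by auto
  have E: "em_le (topspace TX) RX (updown_cl (topspace TX) RX K) (updown_cl (topspace TX) RX L) \<longleftrightarrow>
     up_cl (topspace TX) RX L \<subseteq> up_cl (topspace TX) RX K \<and> down_cl (topspace TX) RX K \<subseteq> down_cl (topspace TX) RX L"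
    unfolding em_le_def using up_updown[OF KX reflX transX] up_updown[OF LX reflX transX]
      down_updown[OF KX reflX transX] down_updown[OF LX reflX transX] by simp
  have Ei: "em_le (topspace (T i)) (R i) (updown_cl (topspace (T i)) (R i) (f i ` K)) (updown_cl (topspace (T i)) (R i) (f i ` L)) \<longleftrightarrow>
     up_cl (topspace (T i)) (R i) (f i ` L) \<subseteq> up_cl (topspace (T i)) (R i) (f i ` K) \<and> down_cl (topspace (T i)) (R i) (f i ` K) \<subseteq> down_cl (topspace (T i)) (R i) (f i ` L)"
    if i: "i \<in> I" for i
  proof -
    have r: "\<forall>x\<in>topspace (T i). R i x x" "\<forall>x\<in>topspace (T i). \<forall>y\<in>topspace (T i). \<forall>z\<in>topspace (T i). R i x y \<and> R i y z \<longrightarrow> R i x z"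
      using reflI transI i by blast+
    show ?thesis unfolding em_le_def using up_updown[OF fK(1)[OF i] r] up_updown[OF fK(2)[OF i] r]
      down_updown[OF fK(1)[OF i] r] down_updown[OF fK(2)[OF i] r] by simp
  qed
  have Eall: "(\<forall>i\<in>I. em_le (topspace (T i)) (R i) (updown_cl (topspace (T i)) (R i) (f i ` K)) (updown_cl (topspace (T i)) (R i) (f i ` L)))
     \<longleftrightarrow> (\<forall>i\<in>I. up_cl (topspace (T i)) (R i) (f i ` L) \<subseteq> up_cl (topspace (T i)) (R i) (f i ` K))
       \<and> (\<forall>i\<in>I. down_cl (topspace (T i)) (R i) (f i ` K) \<subseteq> down_cl (topspace (T i)) (R i) (f i ` L))"
    using Ei by blast
  show ?thesis unfolding E Eall U1 D1 U2 by (rule conjI[OF refl conjI[OF refl refl]])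
qed

end
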